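(* $\mathsf{D}_0(C_2^4)=5$ and $k_{\mathsf{D}}(C_2^4)=3$. Additionally, $\mathsf{D}_{1}(C_2^4)=5$ and $\mathsf{D}_{2}(C_2^4)=8$.
   Context: $C_2^4$ is the elementary abelian $2$-group of rank $4$. A sequence over a finite abelian group $G$ is a finite unordered list of elements with repetitions; zero-sum means its terms sum to $0$. $\mathsf{D}_k(G)$ ($k\in\mathbb{N}$) is the smallest $\ell$ such that every sequence over $G$ of length at least $\ell$ has $k$ disjoint non-empty zero-sum subsequences. It is known that there exists $\mathsf{D}_0(G)\in\mathbb{N}_0$ with $\mathsf{D}_k(G)=\mathsf{D}_0(G)+k\exp(G)$ for all sufficiently large $k$; $k_{\mathsf{D}}(G)$ is the minimal $k_0\in\mathbb{N}$ with $\mathsf{D}_k(G)=\mathsf{D}_0(G)+k\exp(G)$ for all $k\ge k_0$. *)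

theory Defs
  imports "HOL-Analysis.Analysis" "HOL-Library.Multiset" "HOL-Library.Z2"
begin

text \<open>Sequences over an abelian group G (given as a type of class ab_group_add)
  are finite multisets of elements of G. The type of C_2^4 is bit ^ 4.\<close>

type_synonym C2_4 = "bit ^ 4"

definition zero_sum :: "'a::ab_group_add multiset \<Rightarrow> bool" where
  "zero_sum T \<longleftrightarrow> sum_mset T = 0"

definition has_k_disj_zs :: "nat \<Rightarrow> 'a::ab_group_add multiset \<Rightarrow> bool" where
  "has_k_disj_zs k S \<longleftrightarrow>
     (\<exists>Ts :: 'a multiset list. length Ts = k \<and>
        (\<forall>T \<in> set Ts. T \<noteq> {#} \<and> zero_sum T) \<and> sum_list Ts \<subseteq># S)"

definition Dk :: "'a::ab_group_add itself \<Rightarrow> nat \<Rightarrow> nat" where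
  "Dk G k = (LEAST l. \<forall>S :: 'a multiset. size S \<ge> l \<longrightarrow> has_k_disj_zs k S)"

definition group_exp :: "'a::ab_group_add itself \<Rightarrow> nat" where
  "group_exp G = (LEAST n. n > 0 \<and> (\<forall>g :: 'a. (\<Sum>i<n. g) = 0))"

definition D0 :: "'a::ab_group_add itself \<Rightarrow> nat" where
  "D0 G = (THE d. \<exists>K. \<forall>k\<ge>K. Dk G k = d + k * group_exp G)"

definition kD :: "'a::ab_group_add itself \<Rightarrow> nat" where
  "kD G = (LEAST k0. k0 \<ge> 1 \<and> (\<forall>k\<ge>k0. Dk G k = D0 G + k * group_exp G))"

end

theory Submission imports Defs begin

lemma bit_cases2: "(b::bit) = 0 \<or> b = 1" by (cases b) auto

lemma UNIV_bit: "(UNIV::bit set) = {0,1}"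
  using bit_cases2 by auto

lemma card_bit: "CARD(bit) = 2"
  by (simp add: UNIV_bit)

lemma card_C2: "CARD(C2_4) = 16"
  by (simp add: card_bit)

lemma add_self_C2 [simp]: "(x::C2_4) + x = 0"
  by (simp add: vec_eq_iff)

lemma add_self2_C2 [simp]: "(x::C2_4) + (x + y) = y"
  by (simp add: add.assoc[symmetric])

lemma add_eq0_C2 [simp]: "(x::C2_4) + y = 0 \<longleftrightarrow> x = y"
  by (metis add_self2_C2 add_self_C2 add.right_neutral)

lemma finite_UNIV_C2: "finite (UNIV::C2_4 set)"
  using card_C2 by (metis card.infinite zero_neq_numeral)

lemma finite_C2 [simp]: "finite (A::C2_4 set)"
  by (rule finite_subset[OF subset_UNIV finite_UNIV_C2])

lemma card_le16: "card (A::C2_4 set) \<le> 16"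
  using card_mono[OF finite_UNIV_C2, of A] card_C2 by simp

lemma has_0: "has_k_disj_zs 0 S"
  unfolding has_k_disj_zs_def by (rule exI[of _ "[]"]) simp

lemma has_cons:
  assumes "T \<noteq> {#}" "zero_sum T" "T \<subseteq># S" "has_k_disj_zs k (S - T)"
  shows "has_k_disj_zs (Suc k) S"
proof -
  from assms(4) obtain Ts where Ts: "length Ts = k" "\<forall>T\<in>set Ts. T \<noteq> {#} \<and> zero_sum T"
    "sum_list Ts \<subseteq># S - T" unfolding has_k_disj_zs_def by blast
  have "sum_list (T # Ts) = T + sum_list Ts" by simp
  also have "\<dots> \<subseteq># T + (S - T)" using Ts(3) by (simp add: mset_subset_eq_mono_add_left_cancel)
  also have "\<dots> = S" using assms(3) by (simp add: subset_mset.add_diff_inverse)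
  finally show ?thesis unfolding has_k_disj_zs_def
    using Ts assms(1,2) by (intro exI[of _ "T # Ts"]) auto
qed

lemma has_set_cons:
  fixes A X :: "C2_4 set"
  assumes "X \<subseteq> A" "X \<noteq> {}" "sum id X = 0" "has_k_disj_zs k (mset_set (A - X))"
  shows "has_k_disj_zs (Suc k) (mset_set A)"
proof (rule has_cons[of "mset_set X"])
  show "mset_set X \<noteq> {#}" using assms(2) by (simp add: mset_set_empty_iff)
  show "zero_sum (mset_set X)" using assms(3) unfolding zero_sum_def
    by (simp add: sum_unfold_sum_mset)
  show "mset_set X \<subseteq># mset_set A" using assms(1) by (simp add: subset_imp_msubset_mset_set)
  show "has_k_disj_zs k (mset_set A - mset_set X)" using assms(1,4) by (simp add: mset_set_Diff)
qed

lemma sum_list_map_mset: "sum_list (map mset xss) = mset (concat xss)"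
  by (induction xss) auto

lemma has_lists:
  fixes A :: "C2_4 set"
  assumes "distinct (concat xss)" "set (concat xss) \<subseteq> A"
    "\<forall>xs\<in>set xss. xs \<noteq> [] \<and> sum_list xs = 0"
  shows "has_k_disj_zs (length xss) (mset_set A)"
  unfolding has_k_disj_zs_def
proof (intro exI[of _ "map mset xss"] conjI)
  show "length (map mset xss) = length xss" by simp
  show "\<forall>T\<in>set (map mset xss). T \<noteq> {#} \<and> zero_sum T"
    using assms(3) by (auto simp: zero_sum_def sum_mset_sum_list)
  have "sum_list (map mset xss) = mset_set (set (concat xss))"
    using assms(1) by (metis mset_set_set sum_list_map_mset)
  also have "\<dots> \<subseteq># mset_set A" using assms(2) by (simp add: subset_imp_msubset_mset_set)
  finally show "sum_list (map mset xss) \<subseteq># mset_set A" .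
qed


lemma sum_eq_swap: "(x::C2_4) + y = z \<longleftrightarrow> x = z + y"
  by (auto simp: add.assoc)

lemma zs5:
  fixes A :: "C2_4 set"
  assumes "card A \<ge> 5"
  shows "\<exists>X\<subseteq>A. X \<noteq> {} \<and> sum id X = 0"
proof -
  obtain B where B: "B \<subseteq> A" "card B = 5" using obtain_subset_with_card_n[OF assms] by blast
  have "\<not> inj_on (sum id) (Pow B)"
  proof
    assume inj: "inj_on (sum id) (Pow B)"
    have "card (sum id ` Pow B) = card (Pow B)" by (rule card_image[OF inj])
    also have "\<dots> = 32" using B by (simp add: card_Pow)
    finally show False using card_le16[of "sum id ` Pow B"] by simp
  qed
  then obtain X Y where XY: "X \<subseteq> B" "Y \<subseteq> B" "X \<noteq> Y" "sum id X = sum id Y"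
    unfolding inj_on_def by blast
  have 1: "sum id X = sum id (X \<inter> Y) + sum id (X - Y)" by (rule sum.Int_Diff) simp
  have 2: "sum id Y = sum id (X \<inter> Y) + sum id (Y - X)"
    using sum.Int_Diff[of Y id X] by (simp add: Int_commute)
  have eq: "sum id (X - Y) = sum id (Y - X)" using 1 2 XY(4) by simp
  have "sum id ((X - Y) \<union> (Y - X)) = sum id (X - Y) + sum id (Y - X)"
    by (rule sum.union_disjoint) auto
  hence "sum id ((X - Y) \<union> (Y - X)) = 0" using eq by simp
  moreover have "(X - Y) \<union> (Y - X) \<subseteq> A" using XY B by blast
  moreover have "(X - Y) \<union> (Y - X) \<noteq> {}" using XY(3) by blast
  ultimately show ?thesis by blast
qed

lemma has1_set:
  fixes A :: "C2_4 set"
  assumes "card A \<ge> 5"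
  shows "has_k_disj_zs 1 (mset_set A)"
proof -
  obtain X where "X \<subseteq> A" "X \<noteq> {}" "sum id X = 0" using zs5[OF assms] by blast
  then show ?thesis using has_set_cons[of X A 0, OF _ _ _ has_0] by simp
qed

lemma shift_disj:
  fixes A :: "C2_4 set"
  assumes "0 \<notin> A" "\<not>(\<exists>x y. x\<in>A \<and> y\<in>A \<and> x\<noteq>y \<and> x+y\<in>A)" "a \<in> A"
  shows "A \<inter> (\<lambda>x. a + x) ` A = {}"
proof -
  { fix x assume x: "x \<in> A" "a + x \<in> A"
    have False
    proof (cases "x = a")
      case True then show False using assms(1) x by simp
    next
      case False then show False using assms(2,3) x by blast
    qed }
  thus ?thesis by blast
qed

lemma shift_card:
  fixes A :: "C2_4 set"
  shows "card ((\<lambda>x. a + x) ` A) = card A"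
  by (rule card_image) (simp add: inj_on_def)

lemma trip9:
  fixes A :: "C2_4 set"
  assumes "0 \<notin> A" "card A \<ge> 9"
  shows "\<exists>x y. x\<in>A \<and> y\<in>A \<and> x\<noteq>y \<and> x+y\<in>A"
proof (rule ccontr)
  assume nt: "\<not> ?thesis"
  have "A \<noteq> {}" using assms(2) by auto
  then obtain a where a: "a \<in> A" by blast
  have "card (A \<union> (\<lambda>x. a + x) ` A) = card A + card ((\<lambda>x. a + x) ` A)"
    by (rule card_Un_disjoint) (use shift_disj[OF assms(1) nt a] in auto)
  then have "card (A \<union> (\<lambda>x. a + x) ` A) \<ge> 18" using assms(2) shift_card[of a A] by simp
  then show False using card_le16[of "A \<union> (\<lambda>x. a + x) ` A"] by simp
qed

lemma pick:
  fixes A B :: "C2_4 set"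
  assumes "card B < card A"
  shows "\<exists>x\<in>A. x \<notin> B"
  using assms card_mono[OF finite_C2, of A B] by (metis not_le subsetI)

lemma coset_inj:
  fixes p :: "nat \<Rightarrow> C2_4"
  assumes cl: "\<forall>s\<in>S. \<forall>s'\<in>S. s + s' \<in> S"
    and rep: "\<forall>i\<in>I. \<forall>j\<in>I. i \<noteq> j \<longrightarrow> p i + p j \<notin> S"
  shows "inj_on (\<lambda>(i,s). p i + s) (I \<times> S)"
proof (rule inj_onI, clarsimp)
  fix i s j s' assume h: "i \<in> I" "s \<in> S" "j \<in> I" "s' \<in> S" "p i + s = p j + s'"
  have "p i = p i + s + s" by (simp add: add.assoc)
  also have "\<dots> = p j + s' + s" using h(5) by simp
  finally have "p i + p j = (p j + s') + s + p j" by simp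
  also have "\<dots> = s + s'" by (simp add: add_ac)
  finally have e: "p i + p j = s + s'" .
  show "i = j \<and> s = s'"
  proof (cases "i = j")
    case True then show ?thesis using h(5) by simp
  next
    case False
    have "s + s' \<in> S" using cl h(2,4) by blast
    then have "p i + p j \<in> S" using e by simp
    then show ?thesis using rep h(1,3) False by blast
  qed
qed


lemma pairfree:
  fixes x y t :: C2_4
  assumes "x \<noteq> y" "x \<noteq> y + t"
  shows "x + y \<notin> {0, t} \<and> y + x \<notin> {0, t}"
proof -
  have "x + y \<noteq> t" using assms(2) by (simp add: sum_eq_swap add.commute)
  moreover have "y + x \<noteq> t" using assms(2) by (simp add: sum_eq_swap add.commute)
  ultimately show ?thesis using assms(1) by auto
qed

lemma card_set_le: "card (set xs) \<le> length xs"
  by (rule card_length)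

lemma sumfree8:
  fixes A :: "C2_4 set"
  assumes z: "0 \<notin> A" and c8: "card A \<ge> 8"
    and nt: "\<not>(\<exists>x y. x\<in>A \<and> y\<in>A \<and> x\<noteq>y \<and> x+y\<in>A)"
  shows "has_k_disj_zs 2 (mset_set A)"
proof -
  have cA: "card A = 8" using trip9[OF z] nt c8 by fastforce
  have cover: "t + b \<in> A" if b: "b \<in> A" and t: "t \<notin> A" for b t
  proof -
    have "card (A \<union> (\<lambda>x. b + x) ` A) = card A + card ((\<lambda>x. b + x) ` A)"
      by (rule card_Un_disjoint) (use shift_disj[OF z nt b] in auto)
    then have "card (A \<union> (\<lambda>x. b + x) ` A) = CARD(C2_4)"
      using cA shift_card[of b A] card_C2 by simp
    then have "A \<union> (\<lambda>x. b + x) ` A = UNIV"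
      by (rule card_eq_UNIV_imp_eq_UNIV[OF finite_UNIV_C2])
    then obtain w where "w \<in> A" "t = b + w" using t by blast
    then show "t + b \<in> A" by (simp add: add_ac)
  qed
  have inv: "c + (a + b) \<in> A" if h: "a \<in> A" "b \<in> A" "c \<in> A" for a b c
  proof (rule ccontr)
    assume h4: "c + (a + b) \<notin> A"
    have "c + (a + b) + b \<in> A" using cover[OF h(2) h4] .
    hence ca: "c + a \<in> A" by (simp add: add.assoc)
    show False
    proof (cases "c = a")
      case True then show False using h h4 by simp
    next
      case False then show False using nt h(1,3) ca by blast
    qed
  qed
  obtain a where a: "a \<in> A" using pick[of "{}" A] cA by auto
  obtain b where b: "b \<in> A" "b \<notin> {a}" using pick[of "{a}" A] cA by auto
  define t where "t = a + b"
  have t0: "t \<noteq> 0" using b unfolding t_def by simp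
  have bt: "b = a + t" unfolding t_def by simp
  obtain c where c: "c \<in> A" "c \<notin> set [a, a + t]"
    using pick[of "set [a, a + t]" A] cA card_set_le[of "[a, a+t]"] by force
  obtain d where d: "d \<in> A" "d \<notin> set [a, a + t, c, c + t]"
    using pick[of "set [a, a + t, c, c + t]" A] cA card_set_le[of "[a, a+t, c, c+t]"] by force
  obtain e where e: "e \<in> A" "e \<notin> set [a, a + t, c, c + t, d, d + t]"
    using pick[of "set [a, a + t, c, c + t, d, d + t]" A] cA
      card_set_le[of "[a, a + t, c, c + t, d, d + t]"] by force
  have at: "a + t \<in> A" using b bt by simp
  have ct: "c + t \<in> A" using inv[OF a b(1) c(1)] t_def by simp
  have dt: "d + t \<in> A" using inv[OF a b(1) d(1)] t_def by simp
  have et: "e + t \<in> A" using inv[OF a b(1) e(1)] t_def by simp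
  have p1: "c + a \<notin> {0, t} \<and> a + c \<notin> {0, t}" using c by (intro pairfree) auto
  have p2: "d + a \<notin> {0, t} \<and> a + d \<notin> {0, t}" using d by (intro pairfree) auto
  have p3: "d + c \<notin> {0, t} \<and> c + d \<notin> {0, t}" using d by (intro pairfree) auto
  have p4: "e + a \<notin> {0, t} \<and> a + e \<notin> {0, t}" using e by (intro pairfree) auto
  have p5: "e + c \<notin> {0, t} \<and> c + e \<notin> {0, t}" using e by (intro pairfree) auto
  have p6: "e + d \<notin> {0, t} \<and> d + e \<notin> {0, t}" using e by (intro pairfree) auto
  let ?p = "\<lambda>i. [a, c, d, e] ! i"
  have inj: "inj_on (\<lambda>(i,s). ?p i + s) ({0,1,2,3::nat} \<times> {0,t})"
  proof (rule coset_inj)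
    show "\<forall>s\<in>{0, t}. \<forall>s'\<in>{0, t}. s + s' \<in> {0, t}" by simp
    show "\<forall>i\<in>{0,1,2,3::nat}. \<forall>j\<in>{0,1,2,3::nat}. i \<noteq> j \<longrightarrow> ?p i + ?p j \<notin> {0, t}"
      using p1 p2 p3 p4 p5 p6 by simp
  qed
  let ?ps = "[(0::nat,0),(0,t),(1,0),(1,t),(2,0),(2,t),(3,0),(3,t)]"
  have "distinct ?ps" using t0 by simp
  moreover have "set ?ps \<subseteq> {0,1,2,3::nat} \<times> {0,t}" by simp
  ultimately have "distinct (map (\<lambda>(i,s). ?p i + s) ?ps)"
    using inj by (simp add: distinct_map inj_on_subset)
  then have dist: "distinct [a, a + t, c, c + t, d, d + t, e, e + t]" by simp
  have "has_k_disj_zs (length [[a, a + t, c, c + t], [d, d + t, e, e + t]]) (mset_set A)"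
  proof (rule has_lists)
    show "distinct (concat [[a, a + t, c, c + t], [d, d + t, e, e + t]])" using dist by simp
    show "set (concat [[a, a + t, c, c + t], [d, d + t, e, e + t]]) \<subseteq> A"
      using a at c(1) ct d(1) dt e(1) et by simp
    show "\<forall>xs\<in>set [[a, a + t, c, c + t], [d, d + t, e, e + t]]. xs \<noteq> [] \<and> sum_list xs = 0"
      by (simp add: add_ac)
  qed
  then have "has_k_disj_zs (Suc (Suc 0)) (mset_set A)" by simp
  then show ?thesis by (metis Suc_1 One_nat_def)
qed

lemma triple_step:
  fixes A :: "C2_4 set"
  assumes z: "0 \<notin> A" and h: "x \<in> A" "y \<in> A" "x \<noteq> y" "x + y \<in> A"
    and r: "has_k_disj_zs k (mset_set (A - {x, y, x + y}))"
  shows "has_k_disj_zs (Suc k) (mset_set A)"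
proof (rule has_set_cons[OF _ _ _ r])
  show "{x, y, x + y} \<subseteq> A" using h by simp
  show "{x, y, x + y} \<noteq> {}" by simp
  have "x \<noteq> 0" "y \<noteq> 0" using z h by auto
  then show "sum id {x, y, x + y} = 0" using h(3) by (simp add: add_ac)
qed

lemma triple_card:
  fixes A :: "C2_4 set"
  assumes z: "0 \<notin> A" and h: "x \<in> A" "y \<in> A" "x \<noteq> y" "x + y \<in> A"
  shows "card (A - {x, y, x + y}) = card A - 3" "0 \<notin> A - {x, y, x + y}"
proof -
  have "x \<noteq> 0" "y \<noteq> 0" using z h by auto
  then have "card {x, y, x + y} = 3" using h(3) by simp
  then show "card (A - {x, y, x + y}) = card A - 3" using h by (simp add: card_Diff_subset)
  show "0 \<notin> A - {x, y, x + y}" using z by simp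
qed

lemma has2_set:
  fixes A :: "C2_4 set"
  assumes z: "0 \<notin> A" and c: "card A \<ge> 8"
  shows "has_k_disj_zs 2 (mset_set A)"
proof (cases "\<exists>x y. x\<in>A \<and> y\<in>A \<and> x\<noteq>y \<and> x+y\<in>A")
  case True
  then obtain x y where h: "x\<in>A" "y\<in>A" "x\<noteq>y" "x+y\<in>A" by blast
  have "card (A - {x, y, x + y}) \<ge> 5" using triple_card[OF z h] c by simp
  then have "has_k_disj_zs 1 (mset_set (A - {x, y, x + y}))" by (rule has1_set)
  then have "has_k_disj_zs (Suc 1) (mset_set A)" by (rule triple_step[OF z h])
  then show ?thesis by (simp only: Suc_1)
next
  case False
  then show ?thesis using sumfree8[OF z c] by blast
qed

lemma has3_set:
  fixes A :: "C2_4 set"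
  assumes z: "0 \<notin> A" and c: "card A \<ge> 11"
  shows "has_k_disj_zs 3 (mset_set A)"
proof -
  obtain x y where h: "x\<in>A" "y\<in>A" "x\<noteq>y" "x+y\<in>A" using trip9[OF z] c by fastforce
  have "card (A - {x, y, x + y}) \<ge> 8" using triple_card[OF z h] c by simp
  then have "has_k_disj_zs 2 (mset_set (A - {x, y, x + y}))"
    by (rule has2_set[OF triple_card(2)[OF z h]])
  moreover have e3: "(3::nat) = Suc 2" by simp
  ultimately show ?thesis using triple_step[OF z h] by metis
qed


lemma spread:
  fixes u v :: C2_4 and A :: "C2_4 set"
  assumes uv: "u \<noteq> v" "u \<noteq> 0" "v \<noteq> 0" and sub: "UNIV - {0, u, v} \<subseteq> A"
  shows "has_k_disj_zs 4 (mset_set A) \<and> ({u, v} \<subseteq> A \<longrightarrow> has_k_disj_zs 5 (mset_set A))"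
proof -
  define W where "W = {0, u, v, u + v}"
  have cW: "card W \<le> 4" unfolding W_def using card_set_le[of "[0, u, v, u + v]"] by simp
  obtain x where x: "x \<notin> W" using pick[of W UNIV] cW card_C2 by force
  have cW2: "card (W \<union> (\<lambda>s. x + s) ` W) \<le> 8"
    using card_Un_le[of W "(\<lambda>s. x + s) ` W"] card_image_le[of W "\<lambda>s. x + s"] cW by simp
  obtain y where y: "y \<notin> W \<union> (\<lambda>s. x + s) ` W"
    using pick[of "W \<union> (\<lambda>s. x + s) ` W" UNIV] cW2 card_C2 by force
  have cl: "\<forall>s\<in>W. \<forall>s'\<in>W. s + s' \<in> W" unfolding W_def by (simp add: add_ac)
  have xy: "x + y \<notin> W"
  proof
    assume "x + y \<in> W"
    then have "x + (x + y) \<in> (\<lambda>s. x + s) ` W" by blast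
    then show False using y by simp
  qed
  have yW: "y \<notin> W" using y by blast
  let ?p = "\<lambda>i. [x, y, x + y] ! i"
  have pW: "?p i + s \<notin> W" if "i \<in> {0,1,2::nat}" "s \<in> W" for i s
  proof
    assume h: "?p i + s \<in> W"
    have "?p i = (?p i + s) + s" by (simp add: add.assoc)
    also have "\<dots> \<in> W" using cl h that(2) by blast
    finally have "?p i \<in> W" .
    then show False using that(1) x yW xy by auto
  qed
  have inj: "inj_on (\<lambda>(i,s). ?p i + s) ({0,1,2::nat} \<times> W)"
  proof (rule coset_inj[OF cl])
    show "\<forall>i\<in>{0,1,2::nat}. \<forall>j\<in>{0,1,2::nat}. i \<noteq> j \<longrightarrow> ?p i + ?p j \<notin> W"
      using x yW xy by (simp add: add_ac)
  qed
  let ?ps = "[(0::nat,0),(1,0),(2,0),(0,u),(1,v),(2,u+v),(0,v),(1,u+v),(2,u),(0,u+v),(1,u),(2,v)]"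
  have "distinct ?ps" using uv by simp
  moreover have sps: "set ?ps \<subseteq> {0,1,2::nat} \<times> W" unfolding W_def by simp
  ultimately have "distinct (map (\<lambda>(i,s). ?p i + s) ?ps)"
    unfolding distinct_map using inj_on_subset[OF inj] by blast
  then have dist: "distinct [x, y, x + y, x + u, y + v, x + y + (u + v), x + v, y + (u + v), x + y + u,
      x + (u + v), y + u, x + y + v]" by simp
  have notW: "\<forall>z \<in> set (map (\<lambda>(i,s). ?p i + s) ?ps). z \<notin> W"
    using pW sps by fastforce
  then have notW': "\<forall>z \<in> set [x, y, x + y, x + u, y + v, x + y + (u + v), x + v, y + (u + v), x + y + u,
      x + (u + v), y + u, x + y + v]. z \<notin> W" by simp
  let ?xss = "[[x, y, x + y], [x + u, y + v, x + y + (u + v)], [x + v, y + (u + v), x + y + u],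
      [x + (u + v), y + u, x + y + v]]"
  have cc: "concat ?xss = [x, y, x + y, x + u, y + v, x + y + (u + v), x + v, y + (u + v), x + y + u,
      x + (u + v), y + u, x + y + v]" by simp
  have sA: "set (concat ?xss) \<subseteq> A"
  proof
    fix z assume "z \<in> set (concat ?xss)"
    then have "z \<in> set [x, y, x + y, x + u, y + v, x + y + (u + v), x + v, y + (u + v), x + y + u,
      x + (u + v), y + u, x + y + v]" unfolding cc .
    with notW' have "z \<notin> W" by (rule bspec)
    then have "z \<notin> {0, u, v}" unfolding W_def by blast
    then show "z \<in> A" using sub by blast
  qed
  have zs: "\<forall>xs\<in>set ?xss. xs \<noteq> [] \<and> sum_list xs = 0" by (simp add: add_ac)
  have h4: "has_k_disj_zs (length ?xss) (mset_set A)"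
    by (rule has_lists[OF _ sA zs]) (unfold cc, rule dist)
  have "has_k_disj_zs (length (?xss @ [[u, v, u + v]])) (mset_set A)" if uvA: "{u, v} \<subseteq> A"
  proof (rule has_lists)
    have "u + v \<notin> {0, u, v}" using uv by simp
    then have "u + v \<in> A" using sub by blast
    then show "set (concat (?xss @ [[u, v, u + v]])) \<subseteq> A" using sA uvA by simp
    have "u \<in> W" "v \<in> W" "u + v \<in> W" unfolding W_def by auto
    then have n1: "u \<notin> set (concat ?xss)" "v \<notin> set (concat ?xss)" "u + v \<notin> set (concat ?xss)"
      using notW' unfolding cc by blast+
    have d2: "distinct [u, v, u + v]" using uv by simp
    have d1: "distinct (concat ?xss)" unfolding cc by (rule dist)
    have su: "set [u, v, u + v] = {u, v, u + v}" by simp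
    have d3: "set (concat ?xss) \<inter> set [u, v, u + v] = {}" unfolding su using n1 by blast
    have "concat (?xss @ [[u, v, u + v]]) = concat ?xss @ [u, v, u + v]" by (simp only: concat_append concat.simps append_Nil2)
    then show "distinct (concat (?xss @ [[u, v, u + v]]))"
      using d1 d2 d3 by (simp only: distinct_append)
    show "\<forall>xs\<in>set (?xss @ [[u, v, u + v]]). xs \<noteq> [] \<and> sum_list xs = 0"
      using zs by (simp add: add_ac)
  qed
  moreover have "length ?xss = 4" "length (?xss @ [[u, v, u + v]]) = 5" by simp_all
  ultimately show ?thesis using h4 by metis
qed

lemma two_cover:
  fixes C :: "C2_4 set"
  assumes "card C \<le> 2" "0 \<notin> C"
  shows "\<exists>u v. u \<noteq> v \<and> u \<noteq> 0 \<and> v \<noteq> 0 \<and> C \<subseteq> {u, v}"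
proof -
  obtain u where u: "u \<noteq> 0" "C \<noteq> {} \<longrightarrow> u \<in> C"
  proof (cases "C = {}")
    case True
    obtain u where "u \<in> UNIV" "u \<notin> {0::C2_4}" using pick[of "{0}" UNIV] card_C2 by force
    then show ?thesis using True by (intro that) simp_all
  next
    case False
    then obtain u where uC: "u \<in> C" by blast
    have "u \<noteq> 0" using uC assms(2) by metis
    show ?thesis proof (rule that)
      show "u \<noteq> 0" by fact
      show "C \<noteq> {} \<longrightarrow> u \<in> C" using uC by (rule impI)
    qed
  qed
  have c1: "card (C - {u}) \<le> 1"
  proof (cases "C = {}")
    case True then show ?thesis by simp
  next
    case False then have "u \<in> C" using u by blast
    then show ?thesis using assms(1) by (simp add: card_Diff_singleton)
  qed
  obtain v where v: "v \<noteq> 0" "v \<noteq> u" "C - {u} \<subseteq> {v}"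
  proof (cases "C - {u} = {}")
    case True
    obtain v where "v \<in> UNIV" "v \<notin> set [0::C2_4, u]"
      using pick[of "set [0,u]" UNIV] card_C2 card_set_le[of "[0,u]"] by force
    then have "v \<noteq> 0" "v \<noteq> u" by auto
    moreover have "C - {u} \<subseteq> {v}" using True by blast
    ultimately show ?thesis by (rule that)
  next
    case False
    then obtain v where v: "v \<in> C - {u}" by blast
    have "C - {u} \<subseteq> {v}" using c1 v card_le_Suc0_iff_eq[of "C - {u}"] by auto
    moreover have "v \<noteq> 0" "v \<noteq> u" using v assms(2) by auto
    ultimately show ?thesis using that by blast
  qed
  show ?thesis using u v by (intro exI[of _ u] exI[of _ v]) auto
qed


section \<open>Upper bound\<close>

definition fD :: "nat \<Rightarrow> nat" where
  "fD k = (if k = 0 then 0 else if k = 1 then 5 else if k = 2 then 8 else 2*k+5)"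

lemma small_or_set:
  fixes S :: "C2_4 multiset"
  shows "(\<exists>T. T \<subseteq># S \<and> T \<noteq> {#} \<and> zero_sum T \<and> size T \<le> 2) \<or>
         (S = mset_set (set_mset S) \<and> 0 \<notin># S)"
proof (cases "0 \<in># S")
  case True
  then show ?thesis by (intro disjI1 exI[of _ "{#0#}"]) (simp add: zero_sum_def)
next
  case F0: False
  show ?thesis
  proof (cases "\<exists>x. count S x \<ge> 2")
    case True
    then obtain x where x: "count S x \<ge> 2" by blast
    have "{#x, x#} \<subseteq># S" using x by (simp add: subseteq_mset_def)
    then show ?thesis by (intro disjI1 exI[of _ "{#x,x#}"]) (simp add: zero_sum_def)
  next
    case False
    have c: "count S x \<le> 1" for x
    proof -
      have "\<not> count S x \<ge> 2" using False by blast
      then show ?thesis by linarith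
    qed
    have "S = mset_set (set_mset S)"
    proof (rule multiset_eqI)
      fix x show "count S x = count (mset_set (set_mset S)) x"
      proof (cases "x \<in># S")
        case True
        then have p: "count S x > 0" by simp
        have "count S x = 1" using c[of x] p by linarith
        moreover have "count (mset_set (set_mset S)) x = 1" using True by (simp add: count_mset_set')
        ultimately show ?thesis by simp
      next
        case False
        then show ?thesis by (simp add: count_mset_set' not_in_iff)
      qed
    qed
    with F0 show ?thesis by blast
  qed
qed

lemma card_nonzero:
  fixes A :: "C2_4 set"
  assumes "0 \<notin> A" shows "card A \<le> 15"
proof -
  have "A \<subseteq> UNIV - {0}" using assms by blast
  then have "card A \<le> card (UNIV - {0::C2_4})" by (rule card_mono[OF finite_C2])
  also have "\<dots> = 15" using card_C2 by (simp add: card_Diff_singleton)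
  finally show ?thesis .
qed

lemma fD_step: "fD m \<le> fD (Suc m) - 2"
  by (simp add: fD_def)

lemma upper:
  fixes S :: "C2_4 multiset"
  shows "fD k \<le> size S \<Longrightarrow> has_k_disj_zs k S"
proof (induction k arbitrary: S)
  case 0
  show ?case by (rule has_0)
next
  case (Suc m)
  from small_or_set[of S] show ?case
  proof
    assume "\<exists>T. T \<subseteq># S \<and> T \<noteq> {#} \<and> zero_sum T \<and> size T \<le> 2"
    then obtain T where T: "T \<subseteq># S" "T \<noteq> {#}" "zero_sum T" "size T \<le> 2" by blast
    have "size (S - T) = size S - size T" using T(1) by (rule size_Diff_submset)
    then have "fD m \<le> size (S - T)" using Suc.prems T(4) fD_step[of m] by linarith
    then have "has_k_disj_zs m (S - T)" by (rule Suc.IH)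
    then show ?thesis by (rule has_cons[OF T(2) T(3) T(1)])
  next
    assume h: "S = mset_set (set_mset S) \<and> 0 \<notin># S"
    define A where "A = set_mset S"
    have SA: "S = mset_set A" and z: "0 \<notin> A" using h unfolding A_def by auto
    have cA: "card A = size S" using SA by simp
    have c15: "card A \<le> 15" using card_nonzero[OF z] .
    consider "Suc m = 1" | "Suc m = 2" | "Suc m = 3" | "Suc m = 4" | "Suc m = 5" | "Suc m \<ge> 6"
      by linarith
    then show ?thesis
    proof cases
      case 1
      have "card A \<ge> 5" using Suc.prems cA 1 by (simp add: fD_def)
      then show ?thesis unfolding SA 1 by (rule has1_set)
    next
      case 2
      have "card A \<ge> 8" using Suc.prems cA 2 by (simp add: fD_def)
      then show ?thesis unfolding SA 2 by (rule has2_set[OF z])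
    next
      case 3
      have "card A \<ge> 11" using Suc.prems cA 3 by (simp add: fD_def)
      then show ?thesis unfolding SA 3 by (rule has3_set[OF z])
    next
      case 4
      have c13: "card A \<ge> 13" using Suc.prems cA 4 by (simp add: fD_def)
      have "card (UNIV - A) = 16 - card A"
        using card_Diff_subset[of A UNIV] card_C2 by simp
      moreover have "(0::C2_4) \<in> UNIV - A" using z by simp
      ultimately have cc2: "card ((UNIV - A) - {0}) \<le> 2" using c13 by (simp add: card_Diff_singleton)
      have cc0: "0 \<notin> (UNIV - A) - {0::C2_4}" by simp
      obtain u v where uv: "u \<noteq> v" "u \<noteq> 0" "v \<noteq> 0" "(UNIV - A) - {0} \<subseteq> {u, v}"
        using two_cover[OF cc2 cc0] by blast
      have "UNIV - {0, u, v} \<subseteq> A" using uv(4) by blast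
      then show ?thesis unfolding SA 4 using spread[OF uv(1,2,3)] by blast
    next
      case 5
      have c15': "card A = 15" using Suc.prems cA 5 c15 by (simp add: fD_def)
      have "A \<subseteq> UNIV - {0}" using z by blast
      moreover have "card (UNIV - {0::C2_4}) = 15" using card_C2 by (simp add: card_Diff_singleton)
      ultimately have AU: "A = UNIV - {0}" using c15' by (metis card_subset_eq finite_C2)
      obtain u where u: "u \<in> UNIV" "u \<notin> {0::C2_4}" using pick[of "{0}" UNIV] card_C2 by force
      obtain v where v: "v \<in> UNIV" "v \<notin> set [0::C2_4, u]"
        using pick[of "set [0,u]" UNIV] card_C2 card_set_le[of "[0,u]"] by force
      have uv: "u \<noteq> v" "u \<noteq> 0" "v \<noteq> 0" using u v by auto
      have "UNIV - {0, u, v} \<subseteq> A" "{u, v} \<subseteq> A" using AU uv by auto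
      then show ?thesis unfolding SA 5 using spread[OF uv(1,2,3)] by blast
    next
      case 6
      then have "fD (Suc m) \<ge> 17" by (simp add: fD_def)
      then show ?thesis using Suc.prems cA c15 by linarith
    qed
  qed
qed


section \<open>Lower bound\<close>

definition wt :: "C2_4 multiset \<Rightarrow> nat" where
  "wt T = size T + size (filter_mset (\<lambda>x. x$1 = 0) T)"

lemma wt_add [simp]: "wt (A + B) = wt A + wt B"
  by (simp add: wt_def)

lemma wt_empty [simp]: "wt {#} = 0"
  by (simp add: wt_def)

lemma wt_zero: "wt C = 0 \<Longrightarrow> C = {#}"
  by (simp add: wt_def)

lemma wt_mono: "A \<subseteq># B \<Longrightarrow> wt A \<le> wt B"
  by (metis le_add1 mset_subset_eq_exists_conv wt_add)

lemma filter_all: "\<forall>x\<in>#M. P x \<Longrightarrow> filter_mset P M = M"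
  by (simp add: filter_mset_eq_conv)

lemma bit_of_nat: "(of_nat n :: bit) = 0 \<longleftrightarrow> even n"
proof (induction n)
  case 0 then show ?case by simp
next
  case (Suc n)
  then show ?case by (cases "(of_nat n :: bit)") auto
qed

lemma comp1: "(sum_mset T) $ 1 = (of_nat (size (filter_mset (\<lambda>x. x$1 = 1) T)) :: bit)"
proof (induction T)
  case empty then show ?case by simp
next
  case (add x T)
  then show ?case by (cases "x $ 1") auto
qed

lemma even_aff: "sum_mset (T::C2_4 multiset) = 0 \<Longrightarrow> even (size (filter_mset (\<lambda>x. x$1 = 1) T))"
  using comp1[of T] bit_of_nat by simp

lemma LBkey:
  fixes B :: "C2_4 set" and R T :: "C2_4 multiset"
  assumes B: "\<forall>x\<in>B. x$1 = 1" and R: "\<forall>x\<in>#R. x$1 = 0 \<and> x \<noteq> 0"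
    and T: "T \<subseteq># mset_set B + R" "T \<noteq> {#}" "sum_mset T = 0"
  shows "wt T \<ge> 4"
proof -
  define Ta where "Ta = filter_mset (\<lambda>x. x$1 = 1) T"
  define Th where "Th = filter_mset (\<lambda>x. x$1 = 0) T"
  have TT: "T = Ta + Th" unfolding Ta_def Th_def using multiset_partition[of T "\<lambda>x. x$1 = 1"] by simp
  have sT: "size T = size Ta + size Th" using TT by (metis size_union)
  have wtT: "wt T = size Ta + 2 * size Th" unfolding wt_def using sT by (simp add: Th_def)
  have evTa: "even (size Ta)" using even_aff[OF T(3)] unfolding Ta_def .
  have f1: "filter_mset (\<lambda>x. x$1 = 1) (mset_set B + R) = mset_set B"
  proof -
    have "{x \<in> B. x $ 1 = 1} = B" using B by blast
    moreover have "filter_mset (\<lambda>x. x$1 = 1) R = {#}" using R by simp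
    ultimately show ?thesis by simp
  qed
  have f0: "filter_mset (\<lambda>x. x$1 = 0) (mset_set B + R) = R"
  proof -
    have "filter_mset (\<lambda>x. x$1 = 0) (mset_set B) = {#}" using B by (simp del: filter_mset_mset_set)
    moreover have "filter_mset (\<lambda>x. x$1 = 0) R = R" using R by (intro filter_all) blast
    ultimately show ?thesis by simp
  qed
  have "Ta \<subseteq># filter_mset (\<lambda>x. x$1 = 1) (mset_set B + R)"
    unfolding Ta_def by (rule multiset_filter_mono[OF T(1)])
  then have TaB: "Ta \<subseteq># mset_set B" unfolding f1 .
  have "Th \<subseteq># filter_mset (\<lambda>x. x$1 = 0) (mset_set B + R)"
    unfolding Th_def by (rule multiset_filter_mono[OF T(1)])
  then have ThR: "Th \<subseteq># R" unfolding f0 .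
  have Th0: "\<forall>h\<in>#Th. h \<noteq> 0" using ThR R by (meson mset_subset_eqD)
  have cTa: "count Ta x \<le> 1" for x
  proof -
    have "count Ta x \<le> count (mset_set B) x" using TaB by (simp add: subseteq_mset_def)
    also have "\<dots> \<le> 1" by (simp add: count_mset_set')
    finally show ?thesis .
  qed
  have "size Ta \<ge> 4 \<or> size Ta = 2 \<or> size Ta = 0" using evTa by presburger
  then consider "size Ta \<ge> 4" | "size Ta = 2" | "size Ta = 0" by blast
  then show ?thesis
  proof cases
    case 1 then show ?thesis using wtT by simp
  next
    case 2
    obtain a Ta' where a: "Ta = add_mset a Ta'" using size_eq_Suc_imp_eq_union[of Ta 1] 2 by auto
    then have "size Ta' = 1" using 2 by simp
    then obtain b where b: "Ta' = {#b#}" using size_1_singleton_mset by blast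
    have ab: "a \<noteq> b"
    proof
      assume "a = b"
      then have "count Ta a = 2" using a b by simp
      then show False using cTa[of a] by simp
    qed
    have "Th \<noteq> {#}"
    proof
      assume "Th = {#}"
      then have "T = {#a, b#}" using TT a b by simp
      then have "a + b = 0" using T(3) by simp
      then show False using ab by simp
    qed
    then have "size Th \<noteq> 0" by simp
    then have "size Th \<ge> 1" by linarith
    then show ?thesis using wtT 2 by simp
  next
    case 3
    then have "Ta = {#}" by simp
    then have TTh: "T = Th" using TT by simp
    have "size Th \<noteq> 1"
    proof
      assume "size Th = 1"
      then obtain h where h: "Th = {#h#}" using size_1_singleton_mset by blast
      then have "h = 0" using T(3) TTh by simp
      then show False using Th0 h by simp
    qed
    moreover have "size Th \<noteq> 0" using T(2) TTh by simp
    ultimately have "size Th \<ge> 2" by linarith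
    then show ?thesis using wtT by simp
  qed
qed

lemma sum_list_sub: "T \<in> set Ts \<Longrightarrow> T \<subseteq># sum_list (Ts :: 'a multiset list)"
proof (induction Ts)
  case Nil then show ?case by simp
next
  case (Cons T0 Ts)
  show ?case
  proof (cases "T = T0")
    case True then show ?thesis by (simp add: mset_subset_eq_add_left)
  next
    case False
    then have "T \<subseteq># sum_list Ts" using Cons by simp
    also have "sum_list Ts \<subseteq># T0 + sum_list Ts" by (rule mset_subset_eq_add_right)
    finally show ?thesis by simp
  qed
qed

lemma wt_sum_list: "wt (sum_list Ts) = sum_list (map wt Ts)"
  by (induction Ts) simp_all

lemma sum_mset_sum_list': "sum_mset (sum_list Ts) = sum_list (map sum_mset (Ts :: C2_4 multiset list))"
  by (induction Ts) simp_all

lemma sum_list_ge: "\<forall>x\<in>set xs. c \<le> f x \<Longrightarrow> length xs * c \<le> sum_list (map f xs)"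
  by (induction xs) (auto intro: add_mono)

lemma sum_list_zero: "\<forall>x\<in>set xs. f x = (0::C2_4) \<Longrightarrow> sum_list (map f xs) = 0"
  by (induction xs) auto

lemma LB:
  fixes B :: "C2_4 set" and R S :: "C2_4 multiset"
  assumes B: "\<forall>x\<in>B. x$1 = 1" and R: "\<forall>x\<in>#R. x$1 = 0 \<and> x \<noteq> 0"
    and S: "S = mset_set B + R" and w: "wt S \<le> 4 * k" "wt S < 4 * k \<or> sum_mset S \<noteq> 0"
  shows "\<not> has_k_disj_zs k S"
proof
  assume "has_k_disj_zs k S"
  then obtain Ts where Ts: "length Ts = k" "\<forall>T\<in>set Ts. T \<noteq> {#} \<and> zero_sum T"
    "sum_list Ts \<subseteq># S" unfolding has_k_disj_zs_def by blast
  have "\<forall>T\<in>set Ts. 4 \<le> wt T"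
  proof
    fix T assume "T \<in> set Ts"
    then have "T \<subseteq># S" "T \<noteq> {#}" "sum_mset T = 0"
      using sum_list_sub[of T Ts] Ts(2,3) unfolding zero_sum_def by (auto intro: subset_mset.order_trans)
    then show "4 \<le> wt T" using LBkey[OF B R] S by blast
  qed
  then have "length Ts * 4 \<le> wt (sum_list Ts)" unfolding wt_sum_list by (rule sum_list_ge)
  then have ge: "4 * k \<le> wt (sum_list Ts)" using Ts(1) by simp
  have le: "wt (sum_list Ts) \<le> wt S" using wt_mono[OF Ts(3)] .
  obtain C where C: "S = sum_list Ts + C" using Ts(3) mset_subset_eq_exists_conv by blast
  have "wt C = 0" using C ge le w(1) by simp
  then have "S = sum_list Ts" using C wt_zero by simp
  moreover have "sum_mset (sum_list Ts) = 0"
    unfolding sum_mset_sum_list' using Ts(2) unfolding zero_sum_def by (intro sum_list_zero) blast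
  ultimately show False using w ge le by simp
qed


section \<open>Concrete witnesses\<close>

definition vc :: "bit \<Rightarrow> bit \<Rightarrow> bit \<Rightarrow> bit \<Rightarrow> C2_4" where
  "vc a b c d = (\<chi> i. if i = 1 then a else if i = 2 then b else if i = 3 then c else d)"

lemma vc_eq [simp]: "vc a b c d = vc a' b' c' d' \<longleftrightarrow> a = a' \<and> b = b' \<and> c = c' \<and> d = d'"
  by (auto simp: vc_def vec_eq_iff forall_4)

lemma vc_add [simp]: "vc a b c d + vc a' b' c' d' = vc (a+a') (b+b') (c+c') (d+d')"
  by (auto simp: vc_def vec_eq_iff forall_4)

lemma vc_zero: "(0::C2_4) = vc 0 0 0 0"
  by (auto simp: vc_def vec_eq_iff forall_4)

lemma vc_nth1 [simp]: "vc a b c d $ 1 = a" by (simp add: vc_def)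

lemma vc_neq0: "vc a b c d \<noteq> 0 \<longleftrightarrow> \<not>(a = 0 \<and> b = 0 \<and> c = 0 \<and> d = 0)"
  by (simp add: vc_zero)

definition B4 :: "C2_4 set" where
  "B4 = {vc 1 0 0 0, vc 1 1 0 0, vc 1 0 1 0, vc 1 0 0 1}"

definition Aff7 :: "C2_4 set" where
  "Aff7 = {vc 1 0 0 0, vc 1 0 0 1, vc 1 0 1 0, vc 1 0 1 1, vc 1 1 0 0, vc 1 1 0 1, vc 1 1 1 0}"

definition Aff8 :: "C2_4 set" where
  "Aff8 = insert (vc 1 1 1 1) Aff7"

lemma B4_props: "card B4 = 4" "\<forall>x\<in>B4. x$1 = 1" "sum id B4 = vc 0 1 1 1"
  unfolding B4_def by simp_all

lemma Aff7_props: "card Aff7 = 7" "\<forall>x\<in>Aff7. x$1 = 1"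
  unfolding Aff7_def by simp_all

lemma Aff8_props: "card Aff8 = 8" "\<forall>x\<in>Aff8. x$1 = 1" "sum id Aff8 = 0"
  unfolding Aff8_def Aff7_def by (simp_all add: vc_zero)

lemma wt_aff:
  fixes B :: "C2_4 set"
  assumes "\<forall>x\<in>B. x$1 = 1" shows "wt (mset_set B) = card B"
proof -
  have "filter_mset (\<lambda>x. x$1 = 0) (mset_set B) = {#}" using assms by (simp del: filter_mset_mset_set)
  then show ?thesis by (simp add: wt_def)
qed

lemma sum_mset_set: "sum_mset (mset_set (B::C2_4 set)) = sum id B"
  by (simp add: sum_unfold_sum_mset)

lemma rep_odd: "sum_mset (replicate_mset (Suc (2*j)) e) = (e::C2_4)"
  by (induction j) (simp_all del: sum_mset_replicate_mset)

lemma rep_even: "sum_mset (replicate_mset (2*j) e) = (0::C2_4)"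
  by (induction j) (simp_all del: sum_mset_replicate_mset)

lemma witness1: "\<not> has_k_disj_zs 1 (mset_set B4)"
proof (rule LB[of B4 "{#}"])
  show "\<forall>x\<in>B4. x$1 = 1" by (rule B4_props(2))
  show "\<forall>x\<in>#{#}. x$1 = 0 \<and> x \<noteq> 0" by simp
  show "mset_set B4 = mset_set B4 + {#}" by simp
  show "wt (mset_set B4) \<le> 4 * 1" using wt_aff[OF B4_props(2)] B4_props(1) by simp
  show "wt (mset_set B4) < 4 * 1 \<or> sum_mset (mset_set B4) \<noteq> 0"
    using B4_props(3) by (simp add: sum_mset_set vc_neq0)
qed

lemma witness2: "\<not> has_k_disj_zs 2 (mset_set Aff7)"
proof (rule LB[of Aff7 "{#}"])
  show "\<forall>x\<in>Aff7. x$1 = 1" by (rule Aff7_props(2))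
  show "\<forall>x\<in>#{#}. x$1 = 0 \<and> x \<noteq> 0" by simp
  show "mset_set Aff7 = mset_set Aff7 + {#}" by simp
  show "wt (mset_set Aff7) \<le> 4 * 2" using wt_aff[OF Aff7_props(2)] Aff7_props(1) by simp
  show "wt (mset_set Aff7) < 4 * 2 \<or> sum_mset (mset_set Aff7) \<noteq> 0"
    using wt_aff[OF Aff7_props(2)] Aff7_props(1) by simp
qed

lemma witness3:
  assumes "k \<ge> 3"
  defines "R \<equiv> replicate_mset (Suc (2*(k-3))) (vc 0 1 0 0) + {#vc 0 0 1 0#}"
  shows "\<not> has_k_disj_zs k (mset_set Aff8 + R)" "size (mset_set Aff8 + R) = 2*k + 4"
proof -
  have Rp: "\<forall>x\<in>#R. x$1 = 0 \<and> x \<noteq> 0" unfolding R_def by (auto simp: vc_neq0)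
  have "filter_mset (\<lambda>x. x$1 = 0) R = R" using Rp by (intro filter_all) blast
  then have wR: "wt R = 2 * size R" by (simp add: wt_def)
  have sR: "size R = 2*(k-3) + 2" unfolding R_def by simp
  have wS: "wt (mset_set Aff8 + R) = 4 * k"
    using wt_aff[OF Aff8_props(2)] Aff8_props(1) wR sR assms(1) by simp
  have "sum_mset R = vc 0 1 0 0 + vc 0 0 1 0" unfolding R_def
    by (simp del: sum_mset_replicate_mset add: rep_even add_ac)
  then have "sum_mset (mset_set Aff8 + R) = vc 0 1 1 0"
    using Aff8_props(3) by (simp add: sum_mset_set)
  then have sS: "sum_mset (mset_set Aff8 + R) \<noteq> 0" by (simp add: vc_neq0)
  show "\<not> has_k_disj_zs k (mset_set Aff8 + R)"
    by (rule LB[OF Aff8_props(2) Rp refl]) (use wS sS in auto)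
  show "size (mset_set Aff8 + R) = 2*k + 4" using sR Aff8_props(1) assms(1) by simp
qed

lemma witness:
  assumes "k \<ge> 1"
  shows "\<exists>S::C2_4 multiset. size S = fD k - 1 \<and> \<not> has_k_disj_zs k S"
proof -
  consider "k = 1" | "k = 2" | "k \<ge> 3" using assms by linarith
  then show ?thesis
  proof cases
    case 1
    then show ?thesis using witness1 B4_props(1) by (intro exI[of _ "mset_set B4"]) (simp add: fD_def)
  next
    case 2
    then show ?thesis using witness2 Aff7_props(1) by (intro exI[of _ "mset_set Aff7"]) (simp add: fD_def)
  next
    case 3
    then show ?thesis using witness3[OF 3] by (intro exI) (auto simp: fD_def)
  qed
qed

lemma Dk_val:
  assumes "k \<ge> 1" shows "Dk TYPE(C2_4) k = fD k"
  unfolding Dk_def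
proof (rule Least_equality)
  show "\<forall>S::C2_4 multiset. fD k \<le> size S \<longrightarrow> has_k_disj_zs k S" using upper by blast
next
  fix l assume H: "\<forall>S::C2_4 multiset. l \<le> size S \<longrightarrow> has_k_disj_zs k S"
  obtain S :: "C2_4 multiset" where S: "size S = fD k - 1" "\<not> has_k_disj_zs k S"
    using witness[OF assms] by blast
  have "\<not> l \<le> size S" using H S(2) by blast
  moreover have "fD k \<ge> 1" using assms by (simp add: fD_def)
  ultimately show "fD k \<le> l" using S(1) by linarith
qed

lemma Dk_big: "k \<ge> 3 \<Longrightarrow> Dk TYPE(C2_4) k = 5 + k * 2"
  using Dk_val[of k] by (simp add: fD_def)

lemma sum2: "(\<Sum>i<2::nat. g) = g + g"
  by (simp add: numeral_2_eq_2)

lemma group_exp_val: "group_exp TYPE(C2_4) = 2"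
  unfolding group_exp_def
proof (rule Least_equality)
  show "0 < (2::nat) \<and> (\<forall>g::C2_4. (\<Sum>i<(2::nat). g) = 0)" by (simp only: sum2) simp
next
  fix n :: nat assume H: "0 < n \<and> (\<forall>g::C2_4. (\<Sum>i<n. g) = 0)"
  show "2 \<le> n"
  proof (rule ccontr)
    assume "\<not> 2 \<le> n"
    then have "n = 1" using H by linarith
    then have "vc 1 0 0 0 = 0" using H[THEN conjunct2, rule_format, of "vc 1 0 0 0"] by simp
    then show False by (simp add: vc_zero)
  qed
qed

lemma D0_val: "D0 TYPE(C2_4) = 5"
  unfolding D0_def group_exp_val
proof (rule the_equality)
  show "\<exists>K. \<forall>k\<ge>K. Dk TYPE(C2_4) k = 5 + k * 2" using Dk_big by blast
next
  fix d assume "\<exists>K. \<forall>k\<ge>K. Dk TYPE(C2_4) k = d + k * 2"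
  then obtain K where K: "\<forall>k\<ge>K. Dk TYPE(C2_4) k = d + k * 2" by blast
  have "Dk TYPE(C2_4) (max K 3) = d + max K 3 * 2" using K by simp
  moreover have "Dk TYPE(C2_4) (max K 3) = 5 + max K 3 * 2" by (rule Dk_big) simp
  ultimately show "d = 5" by simp
qed

lemma kD_val: "kD TYPE(C2_4) = 3"
  unfolding kD_def D0_val group_exp_val
proof (rule Least_equality)
  show "1 \<le> (3::nat) \<and> (\<forall>k\<ge>3. Dk TYPE(C2_4) k = 5 + k * 2)" using Dk_big by simp
next
  fix k0 :: nat assume H: "1 \<le> k0 \<and> (\<forall>k\<ge>k0. Dk TYPE(C2_4) k = 5 + k * 2)"
  show "3 \<le> k0"
  proof (rule ccontr)
    assume "\<not> 3 \<le> k0"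
    then have "Dk TYPE(C2_4) 2 = 5 + 2 * 2" using H by simp
    moreover have "Dk TYPE(C2_4) 2 = 8" using Dk_val[of 2] by (simp add: fD_def)
    ultimately show False by simp
  qed
qed

theorem theorem7p9:
  shows "D0 TYPE(C2_4) = 5 \<and> kD TYPE(C2_4) = 3 \<and>
         Dk TYPE(C2_4) 1 = 5 \<and> Dk TYPE(C2_4) 2 = 8"
  using D0_val kD_val Dk_val[of 1] Dk_val[of 2] by (simp add: fD_def)

end
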